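(* Let $S\subset \mathbb{R}^2$ be measurable and such that $S$ and $S^\mathsf{c}$ satisfy the $r$-rolling condition. For any $0<\alpha\leq r$, there is a constant $A > 0$ depending only on $\alpha$ such that, for any $z \notin S$, \[ \mu(B(z, \alpha) \cap S) \geq A \, \max\big(0,\alpha -\operatorname{dist}(z, \partial S)\big)^{3/2}. \]
   Context: A set $T\subset\mathbb{R}^2$ satisfies the $r$-rolling condition ($r>0$) if for every $x \in \partial T$ there is an open ball $B$ of radius $r$ with $B \cap T = \emptyset$ and $x \in \partial B$. $S^\mathsf{c}=\mathbb{R}^2\setminus S$. $\mu$ is Lebesgue measure on $\mathbb{R}^2$, $B(z,\alpha)$ is the open ball of center $z$ and radius $\alpha$, and $\operatorname{dist}(z,T)=\inf\{\|z-s\|:s\in T\}$. *)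

theory Defs
  imports "HOL-Analysis.Analysis"
begin

definition rolling :: "real \<Rightarrow> (real^2) set \<Rightarrow> bool" where
  "rolling r T \<longleftrightarrow> (\<forall>x\<in>frontier T. \<exists>c. ball c r \<inter> T = {} \<and> x \<in> frontier (ball c r))"

end

theory Submission
  imports Defs
begin

lemma norm2_sq: "(norm (x::real^2))^2 = (x$1)^2 + (x$2)^2"
  by (simp add: norm_vec_def L2_set_def sum_2)

lemma lens:
  fixes p q :: "real^2" and \<alpha> :: real
  assumes D0: "0 < dist p q" and D2: "dist p q < 2*\<alpha>"
  shows "(2*\<alpha> - dist p q) * sqrt ((2*\<alpha> - dist p q)*\<alpha>/2) / 2 \<le> measure lebesgue (ball p \<alpha> \<inter> ball q \<alpha>)"
proof -
  define D where "D = dist p q"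
  define e where "e = q - p"
  define e1 where "e1 = e$1"
  define e2 where "e2 = e$2"
  have DD: "D^2 = e1^2 + e2^2" unfolding D_def e1_def e2_def e_def
    by (simp add: dist_norm norm2_sq norm_minus_commute[of p q] )
  have Dpos: "D > 0" "D < 2*\<alpha>" using D0 D2 D_def by auto
  have apos: "\<alpha> > 0" using Dpos by auto
  have pp: "D * (2*\<alpha> - D) > 0" using Dpos by simp
  define w where "w = sqrt (\<alpha>^2 - D^2/4)"
  have id1: "\<alpha>^2 - D^2/4 = (2*\<alpha> - D)*\<alpha>/2 + D * (2*\<alpha> - D)/4"
    by (simp add: power2_eq_square field_simps)
  have q1: "(2*\<alpha> - D)*\<alpha>/2 > 0" using Dpos apos by simp
  have nn: "0 \<le> \<alpha>^2 - D^2/4" using id1 q1 pp by linarith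
  have wsq: "w^2 = \<alpha>^2 - D^2/4" unfolding w_def using nn by simp
  have w0: "w \<ge> 0" unfolding w_def using nn by simp
  define \<rho> :: "real^2" where "\<rho> = (\<chi> i. if i = 1 then - e2 else e1)"
  define P1 where "P1 = q - (\<alpha>/D) *\<^sub>R e"
  define P2 where "P2 = p + (\<alpha>/D) *\<^sub>R e"
  define P3 where "P3 = p + (1/2) *\<^sub>R e + (w/D) *\<^sub>R \<rho>"
  have qe: "q = p + e" unfolding e_def by simp
  have c1: "(x + y)$1 = x$1 + y$1" "(x - y)$1 = x$1 - y$1" "(c *\<^sub>R x)$1 = c * x$1"
           "(x + y)$2 = x$2 + y$2" "(x - y)$2 = x$2 - y$2" "(c *\<^sub>R x)$2 = c * x$2" for x y :: "real^2" and c
    by auto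
  have r1: "\<rho>$1 = -e2" "\<rho>$2 = e1" unfolding \<rho>_def by auto
  have inb: "dist a P \<le> \<alpha>" if "(P$1 - a$1)^2 + (P$2 - a$2)^2 \<le> \<alpha>^2" for a P :: "real^2"
  proof -
    have "(dist a P)^2 \<le> \<alpha>^2" using that by (simp add: dist_norm norm_minus_commute[of a P] norm2_sq)
    moreover have "0 \<le> \<alpha>" using apos by simp
    ultimately show ?thesis by (rule power2_le_imp_le)
  qed
  have k1: "(\<alpha>/D)^2 * D^2 = \<alpha>^2" using Dpos by (simp add: power_divide)
  have k2: "(\<alpha>/D - 1)^2 * D^2 = (\<alpha> - D)^2" using Dpos by (simp add: power_divide field_simps)
  have k3: "(1 - \<alpha>/D)^2 * D^2 = (\<alpha> - D)^2" using k2 by (simp add: power2_commute)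
  have ad: "(\<alpha> - D)^2 \<le> \<alpha>^2"
  proof -
    have "(\<alpha> - D)^2 = \<alpha>^2 - D * (2*\<alpha> - D)" by (simp add: power2_eq_square algebra_simps)
    thus ?thesis using pp by simp
  qed
  have inb2: "dist a (a + c *\<^sub>R e) \<le> \<alpha>" if "c^2 * D^2 \<le> \<alpha>^2" for a c
  proof -
    have "dist a (a + c *\<^sub>R e) = \<bar>c\<bar> * D" by (simp add: D_def e_def dist_norm norm_minus_commute)
    moreover have "(\<bar>c\<bar> * D)^2 \<le> \<alpha>^2" using that by (simp add: power_mult_distrib)
    moreover have "0 \<le> \<alpha>" using apos by simp
    ultimately show ?thesis by (metis power2_le_imp_le)
  qed
  have e1: "P1 = p + (1 - \<alpha>/D) *\<^sub>R e" unfolding P1_def qe by (simp add: algebra_simps)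
  have P1p: "dist p P1 \<le> \<alpha>" unfolding e1 by (rule inb2) (use k3 ad in simp)
  have e2: "P1 = q + (- (\<alpha>/D)) *\<^sub>R e" unfolding P1_def by simp
  have P1q: "dist q P1 \<le> \<alpha>" unfolding e2 by (rule inb2) (use k1 in simp)
  have P2p: "dist p P2 \<le> \<alpha>" unfolding P2_def by (rule inb2) (use k1 in simp)
  have e3: "P2 = q + (\<alpha>/D - 1) *\<^sub>R e" unfolding P2_def qe by (simp add: algebra_simps)
  have P2q: "dist q P2 \<le> \<alpha>" unfolding e3 by (rule inb2) (use k2 ad in simp)
  have k4: "(e1/2 - w/D*e2)^2 + (e2/2 + w/D*e1)^2 = \<alpha>^2"
  proof -
    have "(e1/2 - w/D*e2)^2 + (e2/2 + w/D*e1)^2 = (e1^2+e2^2)/4 + (w/D)^2*(e1^2+e2^2)"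
      using Dpos by (simp add: power2_eq_square field_simps)
    also have "\<dots> = D^2/4 + w^2" using Dpos by (simp add: DD[symmetric] power_divide)
    finally show ?thesis using wsq by simp
  qed
  have k5: "(- e1/2 - w/D*e2)^2 + (- e2/2 + w/D*e1)^2 = \<alpha>^2"
  proof -
    have "(- e1/2 - w/D*e2)^2 + (- e2/2 + w/D*e1)^2 = (e1^2+e2^2)/4 + (w/D)^2*(e1^2+e2^2)"
      using Dpos by (simp add: power2_eq_square field_simps)
    also have "\<dots> = D^2/4 + w^2" using Dpos by (simp add: DD[symmetric] power_divide)
    finally show ?thesis using wsq by simp
  qed
  have P3p: "dist p P3 \<le> \<alpha>"
    apply (rule inb) unfolding P3_def qe c1 e1_def[symmetric] e2_def[symmetric] r1
    using k4 by (simp add: algebra_simps)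
  have P3q: "dist q P3 \<le> \<alpha>"
    apply (rule inb) unfolding P3_def qe c1 e1_def[symmetric] e2_def[symmetric] r1
    using k5 by (simp add: algebra_simps)
  define T where "T = convex hull {P1, P2, P3}"
  have Tsub: "T \<subseteq> cball p \<alpha> \<inter> cball q \<alpha>" unfolding T_def
    by (rule hull_minimal) (use P1p P1q P2p P2q P3p P3q in \<open>auto simp: convex_Int\<close>)
  have intT: "interior T \<subseteq> ball p \<alpha> \<inter> ball q \<alpha>"
    using interior_mono[OF Tsub] by (simp add: interior_Int)
  have bT: "bounded T" "convex T" unfolding T_def
    by (auto intro: finite_imp_bounded_convex_hull)
  have mT: "measure lebesgue (interior T) = measure lebesgue T"
    using bT by (intro measure_interior) (auto intro: negligible_convex_frontier)
  have cT: "measure lebesgue T = (2*\<alpha> - D) * w / 2"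
  proof -
    have "measure lebesgue T = \<bar>(P3 $ 1 - P1 $ 1) * (P2 $ 2 - P1 $ 2) - (P2 $ 1 - P1 $ 1) * (P3 $ 2 - P1 $ 2)\<bar> / 2"
    proof -
      have "closed T" unfolding T_def by (intro compact_imp_closed finite_imp_compact_convex_hull) auto
      hence "measure lebesgue T = measure lborel T" by (intro measure_completion) auto
      thus ?thesis unfolding T_def using content_triangle by simp
    qed
    also have "(P3 $ 1 - P1 $ 1) * (P2 $ 2 - P1 $ 2) - (P2 $ 1 - P1 $ 1) * (P3 $ 2 - P1 $ 2)
       = - (2*\<alpha>/D - 1) * (w/D) * (e1^2 + e2^2)"
      unfolding P1_def P2_def P3_def qe c1 e1_def[symmetric] e2_def[symmetric] r1
      using Dpos by (simp add: power2_eq_square field_simps)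
    also have "\<dots> = - (2*\<alpha>/D - 1) * (w/D) * D^2" by (simp only: DD)
    also have "\<dots> = - (2*\<alpha> - D) * w"
      using Dpos by (simp add: power2_eq_square field_simps)
    finally show ?thesis using Dpos w0 by (simp add: abs_mult)
  qed
  have wlow: "sqrt ((2*\<alpha> - D)*\<alpha>/2) \<le> w" unfolding w_def
    using Dpos apos by (intro real_sqrt_le_mono) (use id1 pp in linarith)
  have "(2*\<alpha> - D) * sqrt ((2*\<alpha> - D)*\<alpha>/2) / 2 \<le> (2*\<alpha> - D) * w / 2"
    using wlow Dpos by (simp add: mult_left_mono divide_right_mono)
  also have "\<dots> = measure lebesgue (interior T)" using mT cT by simp
  also have "\<dots> \<le> measure lebesgue (ball p \<alpha> \<inter> ball q \<alpha>)"
    by (rule measure_mono_fmeasurable[OF intT])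
       (auto intro!: fmeasurable_Int_fmeasurable)
  finally show ?thesis unfolding D_def .
qed

theorem lemma2:
  fixes \<alpha> :: real
  assumes "\<alpha> > 0"
  shows "\<exists>A>0. \<forall>(r::real) (S::(real^2) set) z.
           \<alpha> \<le> r \<and> S \<in> sets lebesgue \<and> rolling r S \<and> rolling r (- S) \<and> z \<notin> S
           \<and> frontier S \<noteq> {} \<longrightarrow>
           measure lebesgue (ball z \<alpha> \<inter> S) \<ge> A * (max 0 (\<alpha> - infdist z (frontier S))) powr (3/2)"
proof (intro exI[of _ "sqrt (\<alpha>/2) / 2"] conjI allI impI)
  show "sqrt (\<alpha>/2) / 2 > 0" using assms by simp
  fix r :: real and S :: "(real^2) set" and z :: "real^2"
  assume H: "\<alpha> \<le> r \<and> S \<in> sets lebesgue \<and> rolling r S \<and> rolling r (- S) \<and> z \<notin> S \<and> frontier S \<noteq> {}"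
  define d where "d = infdist z (frontier S)"
  have Sm: "S \<in> sets lebesgue" and rS: "rolling r (- S)" and fne: "frontier S \<noteq> {}" and ar: "\<alpha> \<le> r"
    using H by auto
  have rpos: "r > 0" using ar assms by simp
  have fm: "ball z \<alpha> \<inter> S \<in> fmeasurable lebesgue"
    by (rule fmeasurable_Int_fmeasurable) (auto simp: Sm)
  show "measure lebesgue (ball z \<alpha> \<inter> S) \<ge> sqrt (\<alpha>/2) / 2 * (max 0 (\<alpha> - infdist z (frontier S))) powr (3/2)"
  proof (cases "\<alpha> - d \<le> 0")
    case True
    then show ?thesis unfolding d_def[symmetric] by (simp add: max_def)
  next
    case False
    hence dl: "d < \<alpha>" by simp
    have d0: "d \<ge> 0" unfolding d_def by (rule infdist_nonneg)
    obtain x where xf: "x \<in> frontier S" and dx: "d = dist z x"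
      using infdist_attains_inf[OF frontier_closed fne, of z] unfolding d_def by blast
    have "x \<in> frontier (- S)" using xf by simp
    then obtain c where c1: "ball c r \<inter> - S = {}" and c2: "x \<in> frontier (ball c r)"
      using rS unfolding rolling_def by blast
    have dcx: "dist c x = r" using c2 rpos by (simp add: frontier_ball)
    define c' where "c' = x + (\<alpha>/r) *\<^sub>R (c - x)"
    have ve: "c' - c = (1 - \<alpha>/r) *\<^sub>R (x - c)" unfolding c'_def by (simp add: algebra_simps)
    have "dist c' c = norm ((1 - \<alpha>/r) *\<^sub>R (x - c))"
      unfolding dist_norm ve ..
    also have "\<dots> = (1 - \<alpha>/r) * r" using ar rpos dcx
      by (simp add: dist_norm norm_minus_commute)
    also have "\<dots> = r - \<alpha>" using rpos by (simp add: field_simps)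
    finally have dcc: "dist c' c = r - \<alpha>" .
    have dxc: "dist x c' = \<alpha>" unfolding c'_def dist_norm using dcx rpos assms
      by (simp add: dist_norm norm_minus_commute)
    have bsub: "ball c' \<alpha> \<subseteq> S"
    proof
      fix y assume "y \<in> ball c' \<alpha>"
      hence "dist c' y < \<alpha>" by simp
      hence "dist c y < r" using dcc dist_triangle[of c y c'] by (simp add: dist_commute)
      thus "y \<in> S" using c1 by auto
    qed
    define D where "D = dist z c'"
    have Dup: "D \<le> d + \<alpha>" unfolding D_def dx using dist_triangle[of z c' x] dxc by simp
    have Dlo: "D \<ge> \<alpha> - d" unfolding D_def dx using dist_triangle[of x c' z] dxc
      by (simp add: dist_commute)
    have L: "(2*\<alpha> - D) * sqrt ((2*\<alpha> - D)*\<alpha>/2) / 2 \<le> measure lebesgue (ball z \<alpha> \<inter> ball c' \<alpha>)"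
      unfolding D_def by (rule lens) (use Dup Dlo dl D_def in auto)
    have h: "\<alpha> - d \<le> 2*\<alpha> - D" "0 < \<alpha> - d" using Dup dl by auto
    have eq: "(2*\<alpha> - D) * sqrt ((2*\<alpha> - D)*\<alpha>/2) / 2 = sqrt (\<alpha>/2) / 2 * (2*\<alpha> - D) powr (3/2)"
    proof -
      have hp: "2*\<alpha> - D > 0" using h by linarith
      have "(2*\<alpha> - D) powr (3/2) = (2*\<alpha> - D) powr (1 + 1/2)" by simp
      also have "\<dots> = (2*\<alpha> - D) * sqrt (2*\<alpha> - D)"
        using hp by (subst powr_add) (simp add: powr_half_sqrt)
      finally have "(2*\<alpha> - D) powr (3/2) = (2*\<alpha> - D) * sqrt (2*\<alpha> - D)" .
      moreover have "sqrt ((2*\<alpha> - D)*\<alpha>/2) = sqrt (2*\<alpha> - D) * sqrt (\<alpha>/2)"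
        by (simp add: real_sqrt_mult[symmetric])
      ultimately show ?thesis by simp
    qed
    have "sqrt (\<alpha>/2) / 2 * (max 0 (\<alpha> - d)) powr (3/2) = sqrt (\<alpha>/2) / 2 * (\<alpha> - d) powr (3/2)"
      using h by simp
    also have "\<dots> \<le> sqrt (\<alpha>/2) / 2 * (2*\<alpha> - D) powr (3/2)"
      using h assms by (intro mult_left_mono powr_mono2) auto
    also have "\<dots> \<le> measure lebesgue (ball z \<alpha> \<inter> ball c' \<alpha>)" using L eq by simp
    also have "\<dots> \<le> measure lebesgue (ball z \<alpha> \<inter> S)"
      by (rule measure_mono_fmeasurable[OF _ _ fm]) (use bsub in auto)
    finally show ?thesis unfolding d_def .
  qed
qed

end
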